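(* Let $\mathcal H_k$ be a family of $k$-wise independent functions $[n]\to[n]$ with $k\ge 2\log n$. Let $t<n/2$, let $j=\lfloor \log(n/2t)\rfloor$, and let $T=\{x_1,\dots,x_t\}\subseteq[n]$ be a set of $t$ distinct cards (the cards remaining in the deck, with $x_1$ the next card to be drawn). For $h\in\mathcal H_k$ let $S^h_j=\{x\in[n] : 2^{j-1} < h(x)\le 2^j\}$. Then $$\Pr_{h\sim\mathcal H_k}\Big[S^h_j\cap T=\{x_1\}\ \Big|\ |S^h_j\cap T|=1\Big]\ \ge\ \frac{1}{t+o(1)},$$ where $o(1)\to 0$ as $n\to\infty$.
   Context: A family $\mathcal H_k$ of functions $h:[n]\to[n]$ is $k$-wise independent if for every $k$ distinct $x_1,\dots,x_k\in[n]$ and every $y_1,\dots,y_k\in[n]$, $\Pr_{h\sim\mathcal H_k}[(h(x_1),\dots,h(x_k))=(y_1,\dots,y_k)]=n^{-k}$. $\log$ is base 2. *)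

theory Defs
  imports "HOL-Probability.Probability" "HOL-Library.FuncSet"
begin

text \<open>[n] is rendered as {1..n}. A family of functions [n] -> [n] is a finite nonempty
set of extensional functions; h is drawn uniformly from it.\<close>

definition kwise_indep :: "nat \<Rightarrow> nat \<Rightarrow> (nat \<Rightarrow> nat) set \<Rightarrow> bool" where
  "kwise_indep n k H \<longleftrightarrow>
     finite H \<and> H \<noteq> {} \<and> H \<subseteq> {1..n} \<rightarrow>\<^sub>E {1..n} \<and>
     (\<forall>xs ys. length xs = k \<and> length ys = k \<and> distinct xs \<and>
        set xs \<subseteq> {1..n} \<and> set ys \<subseteq> {1..n} \<longrightarrow>
        measure_pmf.prob (pmf_of_set H) {h. map h xs = ys} = 1 / real n ^ k)"

definition level_set :: "nat \<Rightarrow> (nat \<Rightarrow> nat) \<Rightarrow> nat \<Rightarrow> nat set" where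
  "level_set n h j = {x \<in> {1..n}. 2 powr (real j - 1) < real (h x) \<and> real (h x) \<le> 2 ^ j}"

definition cond_prob :: "(nat \<Rightarrow> nat) set \<Rightarrow> ((nat \<Rightarrow> nat) \<Rightarrow> bool) \<Rightarrow> ((nat \<Rightarrow> nat) \<Rightarrow> bool) \<Rightarrow> real" where
  "cond_prob H A B = measure_pmf.prob (pmf_of_set H) {h. A h \<and> B h} /
                      measure_pmf.prob (pmf_of_set H) {h. B h}"

end

theory Submission
  imports Defs
begin

lemma alt_choose:
  "(\<Sum>i\<le>r. (-1::real)^i * real (Suc m choose i)) = (-1)^r * real (m choose r)"
proof (induction r)
  case 0 then show ?case by simp
next
  case (Suc r)
  have "(\<Sum>i\<le>Suc r. (-1::real)^i * real (Suc m choose i))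
     = (-1)^r * real (m choose r) + (-1)^(Suc r) * (real (m choose r) + real (m choose Suc r))"
    using Suc by simp
  also have "\<dots> = (-1)^(Suc r) * real (m choose Suc r)" by (simp add: algebra_simps)
  finally show ?case .
qed

lemma alt_choose0:
  "(\<Sum>i\<le>r. (-1::real)^i * real (0 choose i)) = 1"
  by (induction r) auto

lemma sum_by_card:
  assumes "finite A"
  shows "(\<Sum>U | U \<subseteq> A \<and> card U \<le> r. g (card U)) = (\<Sum>i\<le>r. real (card A choose i) * (g i :: real))"
proof (induction r)
  case 0
  have "{U. U \<subseteq> A \<and> card U \<le> 0} = {{}}" using assms by (auto dest: finite_subset)
  then show ?case by simp
next
  case (Suc r)
  have fin: "finite {U. U \<subseteq> A \<and> card U \<le> r}" "finite {U. U \<subseteq> A \<and> card U = Suc r}"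
    using assms by (auto simp: finite_subset)
  have eq: "{U. U \<subseteq> A \<and> card U \<le> Suc r} = {U. U \<subseteq> A \<and> card U \<le> r} \<union> {U. U \<subseteq> A \<and> card U = Suc r}"
    by auto
  have "(\<Sum>U | U \<subseteq> A \<and> card U \<le> Suc r. g (card U)) =
        (\<Sum>U | U \<subseteq> A \<and> card U \<le> r. g (card U)) + (\<Sum>U | U \<subseteq> A \<and> card U = Suc r. g (card U))"
    unfolding eq by (rule sum.union_disjoint[OF fin]) auto
  also have "(\<Sum>U | U \<subseteq> A \<and> card U = Suc r. g (card U)) = (\<Sum>U | U \<subseteq> A \<and> card U = Suc r. g (Suc r))"
    by (rule sum.cong) auto
  also have "\<dots> = real (card A choose Suc r) * g (Suc r)"
    using n_subsets[OF assms, of "Suc r"] by simp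
  finally show ?case using Suc by simp
qed

lemma bonf_point:
  assumes "finite Y" "W \<subseteq> Y"
  shows "(\<Sum>U | U \<subseteq> Y \<and> card U \<le> r. (-1::real)^card U * (if U \<subseteq> W then 1 else 0))
        = (\<Sum>i\<le>r. (-1)^i * real (card W choose i))"
proof -
  have fW: "finite W" using assms finite_subset by blast
  have "(\<Sum>U | U \<subseteq> Y \<and> card U \<le> r. (-1::real)^card U * (if U \<subseteq> W then 1 else 0))
     = (\<Sum>U | U \<subseteq> W \<and> card U \<le> r. (-1::real)^card U)"
  proof -
    have "(\<Sum>U | U \<subseteq> Y \<and> card U \<le> r. (-1::real)^card U * (if U \<subseteq> W then 1 else 0))
      = (\<Sum>U \<in> {U. U \<subseteq> Y \<and> card U \<le> r} \<inter> {U. U \<subseteq> W}. (-1::real)^card U)"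
      by (subst sum.inter_restrict) (auto simp: assms finite_subset intro!: sum.cong)
    also have "{U. U \<subseteq> Y \<and> card U \<le> r} \<inter> {U. U \<subseteq> W} = {U. U \<subseteq> W \<and> card U \<le> r}"
      using assms by auto
    finally show ?thesis .
  qed
  also have "\<dots> = (\<Sum>i\<le>r. (-1)^i * real (card W choose i))"
    using sum_by_card[OF fW, of "\<lambda>i. (-1)^i" r] by (simp add: mult.commute)
  finally show ?thesis .
qed

lemma card_lists_nth:
  assumes "\<forall>i<k. finite (A i)"
  shows "card {ys. length ys = k \<and> (\<forall>i<k. ys!i \<in> A i)} = (\<Prod>i<k. card (A i))"
  using assms
proof (induction k arbitrary: A)
  case 0 then show ?case by simp
next
  case (Suc k)
  have IH: "card {ys. length ys = k \<and> (\<forall>i<k. ys!i \<in> A (Suc i))} = (\<Prod>i<k. card (A (Suc i)))"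
    using Suc.IH[of "\<lambda>i. A (Suc i)"] Suc.prems by auto
  have eq: "{ys. length ys = Suc k \<and> (\<forall>i<Suc k. ys!i \<in> A i)} =
     (\<lambda>(a,ys). a#ys) ` (A 0 \<times> {ys. length ys = k \<and> (\<forall>i<k. ys!i \<in> A (Suc i))})"
  proof (rule set_eqI, rule iffI)
    fix zs assume "zs \<in> {ys. length ys = Suc k \<and> (\<forall>i<Suc k. ys!i \<in> A i)}"
    then show "zs \<in> (\<lambda>(a,ys). a#ys) ` (A 0 \<times> {ys. length ys = k \<and> (\<forall>i<k. ys!i \<in> A (Suc i))})"
      by (cases zs) (auto simp: image_iff)
  next
    fix zs assume "zs \<in> (\<lambda>(a,ys). a#ys) ` (A 0 \<times> {ys. length ys = k \<and> (\<forall>i<k. ys!i \<in> A (Suc i))})"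
    then show "zs \<in> {ys. length ys = Suc k \<and> (\<forall>i<Suc k. ys!i \<in> A i)}"
      by (auto simp: less_Suc_eq_0_disj)
  qed
  have inj: "inj_on (\<lambda>(a,ys). a#ys) X" for X :: "('a \<times> 'a list) set"
    by (auto simp: inj_on_def)
  show ?case unfolding eq
    by (simp add: card_image[OF inj] card_cartesian_product IH prod.lessThan_Suc_shift del: prod.lessThan_Suc)
qed

lemma kwise_card:
  assumes kw: "kwise_indep n k H"
    and xs: "distinct xs" "length xs = k" "set xs \<subseteq> {1..n}"
    and A: "\<forall>i<k. A i \<subseteq> {1..n}"
  shows "real (card {h\<in>H. \<forall>i<k. h (xs!i) \<in> A i}) = real (card H) * (\<Prod>i<k. real (card (A i))) / real n ^ k"
proof -
  have fin: "finite H" and ne: "H \<noteq> {}" using kw by (auto simp: kwise_indep_def)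
  define Ys where "Ys = {ys. length ys = k \<and> (\<forall>i<k. ys!i \<in> A i)}"
  have cY: "card Ys = (\<Prod>i<k. card (A i))"
    unfolding Ys_def by (rule card_lists_nth) (use A in \<open>auto intro: finite_subset\<close>)
  have fY: "finite Ys"
  proof -
    have "Ys \<subseteq> {ys. set ys \<subseteq> {1..n} \<and> length ys = k}"
      using A by (auto simp: Ys_def in_set_conv_nth) (meson atLeastAtMost_iff subsetD)+
    then show ?thesis using finite_lists_length_eq[of "{1..n}" k] finite_subset by auto
  qed
  have each: "real (card {h\<in>H. map h xs = ys}) = real (card H) / real n ^ k" if "ys \<in> Ys" for ys
  proof -
    have "set ys \<subseteq> {1..n}" "length ys = k"
      using that A by (auto simp: Ys_def in_set_conv_nth) (meson atLeastAtMost_iff subsetD)+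
    then have "measure_pmf.prob (pmf_of_set H) {h. map h xs = ys} = 1 / real n ^ k"
      using kw xs unfolding kwise_indep_def by blast
    moreover have "measure_pmf.prob (pmf_of_set H) {h. map h xs = ys} = card (H \<inter> {h. map h xs = ys}) / card H"
      by (rule measure_pmf_of_set[OF ne fin])
    moreover have "H \<inter> {h. map h xs = ys} = {h\<in>H. map h xs = ys}" by auto
    moreover have "card H > 0" using fin ne by (simp add: card_gt_0_iff)
    ultimately show ?thesis by (simp add: field_simps)
  qed
  have seq: "{h\<in>H. \<forall>i<k. h (xs!i) \<in> A i} = (\<Union>ys\<in>Ys. {h\<in>H. map h xs = ys})"
    using xs(2) by (auto simp: Ys_def)
  have "card {h\<in>H. \<forall>i<k. h (xs!i) \<in> A i} = (\<Sum>ys\<in>Ys. card {h\<in>H. map h xs = ys})"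
    unfolding seq by (rule card_UN_disjoint) (use fY fin in auto)
  then have "real (card {h\<in>H. \<forall>i<k. h (xs!i) \<in> A i}) = (\<Sum>ys\<in>Ys. real (card H) / real n ^ k)"
    using each by (simp add: of_nat_sum)
  also have "\<dots> = real (card Ys) * real (card H) / real n ^ k" by simp
  finally show ?thesis using cY by (simp add: of_nat_prod)
qed

lemma kwise_level:
  assumes kw: "kwise_indep n k H" and kn: "k \<le> n"
    and V: "V \<subseteq> {1..n}" "card V \<le> k" and L: "L \<subseteq> {1..n}" and n: "n > 0"
  shows "real (card {h\<in>H. \<forall>v\<in>V. h v \<in> L}) = real (card H) * (real (card L) / real n) ^ card V"
proof -
  have Hs: "H \<subseteq> {1..n} \<rightarrow>\<^sub>E {1..n}" using kw by (auto simp: kwise_indep_def)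
  obtain W where W: "V \<subseteq> W" "W \<subseteq> {1..n}" "card W = k"
    using exists_subset_between[of V k "{1..n}"] V kn card_atLeastAtMost[of 1 n] by fastforce
  have fV: "finite V" using V finite_subset by blast
  have fW: "finite W" using W finite_subset by blast
  define m where "m = card V"
  define l1 where "l1 = sorted_list_of_set V"
  define l2 where "l2 = sorted_list_of_set (W - V)"
  define xs where "xs = l1 @ l2"
  have l1: "set l1 = V" "distinct l1" "length l1 = m" using fV by (auto simp: l1_def m_def)
  have l2: "set l2 = W - V" "distinct l2" "length l2 = k - m"
    using fW W fV by (simp_all add: l2_def m_def card_Diff_subset)
  have mk: "m \<le> k" using V m_def by simp
  have xs: "distinct xs" "length xs = k" "set xs \<subseteq> {1..n}"
    using l1 l2 W mk by (auto simp: xs_def)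
  define A where "A i = (if i < m then L else {1..n})" for i
  have Ai: "\<forall>i<k. A i \<subseteq> {1..n}" using L by (auto simp: A_def)
  have seteq: "{h\<in>H. \<forall>i<k. h (xs!i) \<in> A i} = {h\<in>H. \<forall>v\<in>V. h v \<in> L}"
  proof (rule set_eqI, rule iffI)
    fix h assume h: "h \<in> {h\<in>H. \<forall>i<k. h (xs!i) \<in> A i}"
    have "h v \<in> L" if "v \<in> V" for v
    proof -
      have "v \<in> set l1" using that l1(1) by simp
      then obtain i where i0: "i < length l1" "l1 ! i = v" by (auto simp: in_set_conv_nth)
      then have i: "i < m" "l1 ! i = v" using l1(3) by auto
      then have "xs ! i = v" using l1 by (simp add: xs_def nth_append)
      moreover have "i < k" using i mk by simp
      ultimately have "h v \<in> A i" using h by blast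
      then show ?thesis using i by (simp add: A_def)
    qed
    then show "h \<in> {h\<in>H. \<forall>v\<in>V. h v \<in> L}" using h by blast
  next
    fix h assume h: "h \<in> {h\<in>H. \<forall>v\<in>V. h v \<in> L}"
    have "h (xs!i) \<in> A i" if "i < k" for i
    proof (cases "i < m")
      case True
      then have "xs ! i = l1 ! i" using l1 by (simp add: xs_def nth_append)
      moreover have "l1 ! i \<in> V" using True l1(1,3) nth_mem[of i l1] by simp
      ultimately show ?thesis using h True by (simp add: A_def)
    next
      case False
      have "xs ! i \<in> set xs" using xs that by simp
      then have "xs ! i \<in> {1..n}" using xs by blast
      moreover have "h \<in> {1..n} \<rightarrow>\<^sub>E {1..n}" using h Hs by blast
      ultimately have "h (xs ! i) \<in> {1..n}" by (rule PiE_mem[rotated])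
      then show ?thesis using False by (simp add: A_def)
    qed
    then show "h \<in> {h\<in>H. \<forall>i<k. h (xs!i) \<in> A i}" using h by blast
  qed
  have prodeq: "(\<Prod>i<k. real (card (A i))) = real (card L) ^ m * real n ^ (k - m)"
  proof -
    have "{..<k} = {..<m} \<union> {m..<k}" using mk by auto
    then have "(\<Prod>i<k. real (card (A i))) = (\<Prod>i<m. real (card (A i))) * (\<Prod>i\<in>{m..<k}. real (card (A i)))"
      by (metis prod.union_disjoint finite_lessThan finite_atLeastLessThan ivl_disj_int_one(2) lessThan_atLeast0)
    also have "(\<Prod>i<m. real (card (A i))) = real (card L) ^ m" by (simp add: A_def)
    also have "(\<Prod>i\<in>{m..<k}. real (card (A i))) = real n ^ (k - m)" by (simp add: A_def)
    finally show ?thesis .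
  qed
  have "real n ^ k = real n ^ m * real n ^ (k - m)" using mk by (metis le_add_diff_inverse power_add)
  then show ?thesis
  proof -
    have "real (card {h\<in>H. \<forall>v\<in>V. h v \<in> L}) = real (card H) * (real (card L) ^ m * real n ^ (k - m)) / (real n ^ m * real n ^ (k - m))"
      using kwise_card[OF kw xs Ai] seteq prodeq \<open>real n ^ k = _\<close> by simp
    also have "\<dots> = real (card H) * (real (card L) / real n) ^ m"
      using n by (simp add: power_divide)
    finally show ?thesis by (simp add: m_def)
  qed
qed

lemma bonf_sum:
  fixes P :: "'h \<Rightarrow> 'b \<Rightarrow> bool"
  assumes "finite H" "finite Y"
  shows "(\<Sum>h\<in>H. (if P h x then 1 else 0) * (\<Sum>U | U \<subseteq> Y \<and> card U \<le> r. (-1::real)^card U * (if (\<forall>y\<in>U. P h y) then 1 else 0)))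
       = (\<Sum>U | U \<subseteq> Y \<and> card U \<le> r. (-1)^card U * real (card {h\<in>H. \<forall>y\<in>insert x U. P h y}))"
proof -
  have "(\<Sum>h\<in>H. (if P h x then 1 else 0) * (\<Sum>U | U \<subseteq> Y \<and> card U \<le> r. (-1::real)^card U * (if (\<forall>y\<in>U. P h y) then 1 else 0)))
     = (\<Sum>h\<in>H. \<Sum>U | U \<subseteq> Y \<and> card U \<le> r. (-1::real)^card U * (if (\<forall>y\<in>insert x U. P h y) then 1 else 0))"
    by (rule sum.cong) (auto simp: sum_distrib_left intro!: sum.cong)
  also have "\<dots> = (\<Sum>U | U \<subseteq> Y \<and> card U \<le> r. \<Sum>h\<in>H. (-1::real)^card U * (if (\<forall>y\<in>insert x U. P h y) then 1 else 0))"
    by (rule sum.swap)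
  also have "\<dots> = (\<Sum>U | U \<subseteq> Y \<and> card U \<le> r. (-1)^card U * real (card {h\<in>H. \<forall>y\<in>insert x U. P h y}))"
  proof (rule sum.cong[OF refl])
    fix U
    have "real (card {h\<in>H. \<forall>y\<in>insert x U. P h y}) = (\<Sum>h\<in>H. (if (\<forall>y\<in>insert x U. P h y) then 1 else 0))"
      using assms(1) by (simp add: sum.If_cases Int_def conj_commute)
    then show "(\<Sum>h\<in>H. (-1::real)^card U * (if (\<forall>y\<in>insert x U. P h y) then 1 else 0)) = (-1)^card U * real (card {h\<in>H. \<forall>y\<in>insert x U. P h y})"
      by (simp add: sum_distrib_left)
  qed
  finally show ?thesis .
qed

lemma bonf_pt:
  fixes P :: "'h \<Rightarrow> 'b \<Rightarrow> bool" and h :: 'h and x :: 'b and r :: nat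
  assumes "finite Y"
  defines "f \<equiv> (if P h x then 1 else 0) * (\<Sum>U | U \<subseteq> Y \<and> card U \<le> r. (-1::real)^card U * (if (\<forall>y\<in>U. P h y) then 1 else 0))"
  defines "g \<equiv> (if P h x \<and> (\<forall>y\<in>Y. \<not> P h y) then 1 else (0::real))"
  shows "odd r \<Longrightarrow> f \<le> g" and "even r \<Longrightarrow> g \<le> f"
proof -
  define W where "W = {y\<in>Y. P h y}"
  have WY: "W \<subseteq> Y" by (auto simp: W_def)
  have "(\<Sum>U | U \<subseteq> Y \<and> card U \<le> r. (-1::real)^card U * (if (\<forall>y\<in>U. P h y) then 1 else 0))
      = (\<Sum>U | U \<subseteq> Y \<and> card U \<le> r. (-1::real)^card U * (if U \<subseteq> W then 1 else 0))"
    by (rule sum.cong) (auto simp: W_def)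
  also have "\<dots> = (\<Sum>i\<le>r. (-1)^i * real (card W choose i))"
    by (rule bonf_point[OF assms(1) WY])
  finally have eq: "f = (if P h x then 1 else 0) * (\<Sum>i\<le>r. (-1)^i * real (card W choose i))"
    unfolding f_def by simp
  have fW: "finite W" using WY assms(1) finite_subset by blast
  show "odd r \<Longrightarrow> f \<le> g"
  proof -
    assume r: "odd r"
    show "f \<le> g"
    proof (cases "W = {}")
      case True
      have c: "(\<Sum>i\<le>r. (-1::real)^i * real (card W choose i)) = 1" using True alt_choose0[of r] by simp
      have "g = (if P h x then 1 else 0)" using True by (auto simp: g_def W_def)
      then show ?thesis unfolding eq c by simp
    next
      case False
      then obtain m where m: "card W = Suc m" using fW by (metis card_0_eq not0_implies_Suc)
      have "(\<Sum>i\<le>r. (-1::real)^i * real (card W choose i)) \<le> 0"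
        unfolding m alt_choose using r by simp
      moreover have "g = 0" using False unfolding g_def W_def by auto
      ultimately show ?thesis unfolding eq by simp
    qed
  qed
  show "even r \<Longrightarrow> g \<le> f"
  proof -
    assume r: "even r"
    show "g \<le> f"
    proof (cases "W = {}")
      case True
      have c: "(\<Sum>i\<le>r. (-1::real)^i * real (card W choose i)) = 1" using True alt_choose0[of r] by simp
      have "g = (if P h x then 1 else 0)" using True by (auto simp: g_def W_def)
      then show ?thesis unfolding eq c by simp
    next
      case False
      then obtain m where m: "card W = Suc m" using fW by (metis card_0_eq not0_implies_Suc)
      have "(\<Sum>i\<le>r. (-1::real)^i * real (card W choose i)) \<ge> 0"
        unfolding m alt_choose using r by simp
      moreover have "g = 0" using False unfolding g_def W_def by auto
      ultimately show ?thesis unfolding eq by simp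
    qed
  qed
qed

lemma level_bounds:
  assumes kw: "kwise_indep n k H" and kn: "k \<le> n" and T: "T \<subseteq> {1..n}" and x: "x \<in> T"
    and L: "L \<subseteq> {1..n}" and n: "n > 0" and rk: "r + 1 \<le> k"
  defines "a \<equiv> real (card {h\<in>H. h x \<in> L \<and> (\<forall>y\<in>T-{x}. h y \<notin> L)})"
  defines "S \<equiv> (\<Sum>i\<le>r. real (card T - 1 choose i) * ((-1)^i * (real (card H) * (real (card L) / real n)^(i+1))))"
  shows "odd r \<Longrightarrow> S \<le> a" and "even r \<Longrightarrow> a \<le> S"
proof -
  define Y where "Y = T - {x}"
  have fT: "finite T" using T finite_subset by blast
  have fY: "finite Y" using fT by (simp add: Y_def)
  have cY: "card Y = card T - 1" using x fT by (simp add: Y_def)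
  have fH: "finite H" using kw by (simp add: kwise_indep_def)
  define P where "P h y = (h y \<in> L)" for h :: "nat \<Rightarrow> nat" and y
  define f where "f h = (if P h x then 1 else 0) * (\<Sum>U | U \<subseteq> Y \<and> card U \<le> r. (-1::real)^card U * (if (\<forall>y\<in>U. P h y) then 1 else 0))" for h
  define g where "g h = (if P h x \<and> (\<forall>y\<in>Y. \<not> P h y) then 1 else (0::real))" for h
  have ag: "a = (\<Sum>h\<in>H. g h)"
    unfolding a_def g_def P_def Y_def using fH by (simp add: sum.If_cases Int_def conj_commute)
  have "(\<Sum>h\<in>H. f h) = (\<Sum>U | U \<subseteq> Y \<and> card U \<le> r. (-1)^card U * real (card {h\<in>H. \<forall>y\<in>insert x U. P h y}))"
    unfolding f_def by (rule bonf_sum[OF fH fY])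
  also have "\<dots> = (\<Sum>U | U \<subseteq> Y \<and> card U \<le> r. (-1)^card U * (real (card H) * (real (card L) / real n)^(card U + 1)))"
  proof (rule sum.cong[OF refl])
    fix U assume "U \<in> {U. U \<subseteq> Y \<and> card U \<le> r}"
    then have U: "U \<subseteq> Y" "card U \<le> r" by auto
    have fU: "finite U" using U fY finite_subset by blast
    have xU: "x \<notin> U" using U by (auto simp: Y_def)
    have ci: "card (insert x U) = card U + 1" using fU xU by simp
    have "insert x U \<subseteq> {1..n}" using U x T by (auto simp: Y_def)
    moreover have "card (insert x U) \<le> k" using ci U rk by simp
    ultimately have "real (card {h\<in>H. \<forall>v\<in>insert x U. h v \<in> L}) = real (card H) * (real (card L) / real n) ^ card (insert x U)"
      by (rule kwise_level[OF kw kn _ _ L n])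
    then show "(-1)^card U * real (card {h\<in>H. \<forall>y\<in>insert x U. P h y}) = (-1)^card U * (real (card H) * (real (card L) / real n)^(card U + 1))"
      by (simp add: P_def ci)
  qed
  also have "\<dots> = S"
    unfolding S_def using sum_by_card[OF fY, of "\<lambda>i. (-1)^i * (real (card H) * (real (card L) / real n)^(i+1))" r]
    by (simp add: cY)
  finally have fS: "(\<Sum>h\<in>H. f h) = S" .
  show "odd r \<Longrightarrow> S \<le> a"
    unfolding ag fS[symmetric] f_def g_def by (rule sum_mono) (rule bonf_pt(1)[OF fY])
  show "even r \<Longrightarrow> a \<le> S"
    unfolding ag fS[symmetric] f_def g_def by (rule sum_mono) (rule bonf_pt(2)[OF fY])
qed

theorem mainTheorem9:
  "\<exists>\<epsilon> :: nat \<Rightarrow> real. \<epsilon> \<longlonglongrightarrow> 0 \<and>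
     (\<forall>n k H t T x1 j.
        kwise_indep n k H \<longrightarrow> real k \<ge> 2 * log 2 (real n) \<longrightarrow> k \<le> n \<longrightarrow>
        T \<subseteq> {1..n} \<longrightarrow> card T = t \<longrightarrow> x1 \<in> T \<longrightarrow> real t < real n / 2 \<longrightarrow>
        j = nat \<lfloor>log 2 (real n / (2 * real t))\<rfloor> \<longrightarrow>
        cond_prob H (\<lambda>h. level_set n h j \<inter> T = {x1}) (\<lambda>h. card (level_set n h j \<inter> T) = 1)
          \<ge> 1 / (real t + \<epsilon> n))"
proof (rule exI[of _ "\<lambda>n. 4 / real n"], rule conjI)
  show "(\<lambda>n. 4 / real n) \<longlonglongrightarrow> 0" by (rule lim_const_over_n)
next
  show "\<forall>n k H t T x1 j.
        kwise_indep n k H \<longrightarrow> real k \<ge> 2 * log 2 (real n) \<longrightarrow> k \<le> n \<longrightarrow>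
        T \<subseteq> {1..n} \<longrightarrow> card T = t \<longrightarrow> x1 \<in> T \<longrightarrow> real t < real n / 2 \<longrightarrow>
        j = nat \<lfloor>log 2 (real n / (2 * real t))\<rfloor> \<longrightarrow>
        cond_prob H (\<lambda>h. level_set n h j \<inter> T = {x1}) (\<lambda>h. card (level_set n h j \<inter> T) = 1)
          \<ge> 1 / (real t + 4 / real n)"
  proof (intro allI impI)
    fix n k H t T x1 j
    assume kw: "kwise_indep n k H" and klog: "real k \<ge> 2 * log 2 (real n)" and kn: "k \<le> n"
      and T: "T \<subseteq> {1..n}" and tT: "card T = t" and x1: "x1 \<in> T" and tn: "real t < real n / 2"
      and jdef: "j = nat \<lfloor>log 2 (real n / (2 * real t))\<rfloor>"
    have fT: "finite T" using T finite_subset by blast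
    have t1: "t \<ge> 1" using x1 fT tT by (metis One_nat_def Suc_leI card_gt_0_iff empty_iff)
    have n3: "n \<ge> 3" using tn t1 by linarith
    have fH: "finite H" and neH: "H \<noteq> {}" using kw by (auto simp: kwise_indep_def)
    define N where "N = real (card H)"
    have N0: "N > 0" using fH neH by (simp add: N_def card_gt_0_iff)
    have logn: "log 2 (real n) \<ge> 1" using n3 by simp
    have k2: "k \<ge> 2" using klog logn by linarith
    have nk: "real n * real n \<le> 2 ^ k"
    proof -
      have "real n * real n = 2 powr (log 2 (real n)) * 2 powr (log 2 (real n))" using n3 by simp
      also have "\<dots> = 2 powr (2 * log 2 (real n))" by (simp add: powr_add[symmetric])
      also have "\<dots> \<le> 2 powr (real k)" using klog by simp
      also have "\<dots> = 2 ^ k" by (simp add: powr_realpow)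
      finally show ?thesis .
    qed
    define q where "q = real n / (2 * real t)"
    have q1: "q > 1" using tn t1 by (simp add: q_def field_simps)
    have lq: "log 2 q > 0" using q1 by simp
    have rj: "real j \<le> log 2 q" using lq by (simp add: jdef q_def[symmetric])
    have pj: "(2::real) ^ j \<le> q"
    proof -
      have "(2::real) ^ j = 2 powr real j" by (simp add: powr_realpow)
      also have "\<dots> \<le> 2 powr log 2 q" using rj by simp
      also have "\<dots> = q" using q1 by simp
      finally show ?thesis .
    qed
    have pj2: "(2::real) ^ j * (2 * real t) \<le> real n" using pj t1 by (simp add: q_def field_simps)
    have pjn: "2 ^ j \<le> n"
    proof -
      have "1 \<le> 2 * real t" using t1 by simp
      then have "(2::real) ^ j * 1 \<le> 2 ^ j * (2 * real t)" by (intro mult_left_mono) simp_all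
      then have "(2::real) ^ j \<le> real n" using pj2 by linarith
      then show ?thesis by (metis of_nat_le_iff of_nat_numeral of_nat_power)
    qed
    define L where "L = {v::nat. 2 powr (real j - 1) < real v \<and> real v \<le> 2 ^ j}"
    have Lfacts: "L \<subseteq> {1..n} \<and> 1 \<le> card L \<and> 2 * card L \<le> 2 ^ j + 1"
    proof (cases j)
      case 0
      have h: "2 powr (-1::real) = 1/2" by (simp add: powr_minus)
      have "L = {1}"
      proof (rule set_eqI)
        fix v
        show "v \<in> L \<longleftrightarrow> v \<in> {1}" unfolding L_def using 0 h by auto
      qed
      then show ?thesis using 0 n3 by simp
    next
      case (Suc j')
      have h: "2 powr (real j - 1) = 2 ^ j'" using Suc by (simp add: powr_realpow)
      have Leq: "L = {2^j'<..2^j}"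
      proof (rule set_eqI)
        fix v
        have "real v \<le> 2 ^ j \<longleftrightarrow> v \<le> 2 ^ j" by (metis of_nat_le_iff of_nat_numeral of_nat_power)
        moreover have "2 ^ j' < real v \<longleftrightarrow> 2 ^ j' < v" by (metis of_nat_less_iff of_nat_numeral of_nat_power)
        ultimately show "v \<in> L \<longleftrightarrow> v \<in> {2^j'<..2^j}" unfolding L_def h by auto
      qed
      moreover have "(2::nat) ^ j - 2 ^ j' = 2 ^ j'" using Suc by simp
      ultimately have "card L = 2 ^ j'" by simp
      moreover have "L \<subseteq> {1..n}" using Leq pjn by auto
      ultimately show ?thesis using Suc by simp
    qed
    have LS: "L \<subseteq> {1..n}" and cL1: "1 \<le> card L" and cL2: "2 * card L \<le> 2 ^ j + 1" using Lfacts by auto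
    define p where "p = real (card L) / real n"
    have p0: "p > 0" using cL1 n3 by (simp add: p_def)
    have tp: "2 * real t * p < 1"
    proof -
      have "real (2 * card L) \<le> real (2 ^ j + 1)" using cL2 by (simp only: of_nat_le_iff)
      then have "2 * real (card L) \<le> 2 ^ j + 1" by simp
      then have "real t * (2 * real (card L)) \<le> real t * (2 ^ j + 1)" by (intro mult_left_mono) simp_all
      then have "2 * real t * real (card L) \<le> real t * (2 ^ j + 1)" by (simp add: algebra_simps)
      also have "\<dots> = real t * 2 ^ j + real t" by (simp add: algebra_simps)
      also have "\<dots> < real n" using pj2 tn by (simp add: algebra_simps)
      finally show ?thesis using n3 by (simp add: p_def field_simps)
    qed
    show "cond_prob H (\<lambda>h. level_set n h j \<inter> T = {x1}) (\<lambda>h. card (level_set n h j \<inter> T) = 1)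
          \<ge> 1 / (real t + 4 / real n)"
    proof -
      have lev: "level_set n h j \<inter> T = {y\<in>T. h y \<in> L}" for h
        using T by (auto simp: level_set_def L_def)
      define E where "E x = {h\<in>H. h x \<in> L \<and> (\<forall>y\<in>T-{x}. h y \<notin> L)}" for x
      define a where "a x = real (card (E x))" for x
      have numset: "H \<inter> {h. level_set n h j \<inter> T = {x1} \<and> card (level_set n h j \<inter> T) = 1} = E x1"
      proof -
        have "{y\<in>T. h y \<in> L} = {x1} \<longleftrightarrow> h x1 \<in> L \<and> (\<forall>y\<in>T-{x1}. h y \<notin> L)" for h
          using x1 by blast
        then show ?thesis unfolding lev E_def by (auto simp del: One_nat_def) (metis card_1_singleton_iff One_nat_def)
      qed
      have denset: "H \<inter> {h. card (level_set n h j \<inter> T) = 1} = (\<Union>x\<in>T. E x)"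
      proof -
        have "card {y\<in>T. h y \<in> L} = 1 \<longleftrightarrow> (\<exists>x\<in>T. h x \<in> L \<and> (\<forall>y\<in>T-{x}. h y \<notin> L))" for h
        proof -
          have "card {y\<in>T. h y \<in> L} = 1 \<longleftrightarrow> (\<exists>x. {y\<in>T. h y \<in> L} = {x})" using card_1_singleton_iff[of "{y\<in>T. h y \<in> L}"] by simp
          also have "\<dots> \<longleftrightarrow> (\<exists>x\<in>T. h x \<in> L \<and> (\<forall>y\<in>T-{x}. h y \<notin> L))" by blast
          finally show ?thesis .
        qed
        then show ?thesis unfolding lev E_def by auto
      qed
      have fE: "finite (E x)" for x using fH by (simp add: E_def)
      have dis: "E x \<inter> E x' = {}" if "x \<in> T" "x' \<in> T" "x \<noteq> x'" for x x'
        using that by (auto simp: E_def)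
      have cden: "real (card (\<Union>x\<in>T. E x)) = (\<Sum>x\<in>T. a x)"
        unfolding a_def using card_UN_disjoint[OF fT, of E] fE dis by (simp add: of_nat_sum)
      have cp: "cond_prob H (\<lambda>h. level_set n h j \<inter> T = {x1}) (\<lambda>h. card (level_set n h j \<inter> T) = 1)
          = a x1 / (\<Sum>x\<in>T. a x)"
        unfolding cond_prob_def measure_pmf_of_set[OF neH fH] numset denset cden a_def
        using N0 by (simp add: N_def)
      define S where "S r = (\<Sum>i\<le>r. real (card T - 1 choose i) * ((-1)^i * (real (card H) * (real (card L) / real n)^(i+1))))" for r
      have lb: "S r \<le> a x" if "odd r" "r + 1 \<le> k" "x \<in> T" for r x
        unfolding S_def a_def E_def by (rule level_bounds(1)[OF kw kn T that(3) LS _ that(2) that(1)]) (use n3 in simp)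
      have ub: "a x \<le> S r" if "even r" "r + 1 \<le> k" "x \<in> T" for r x
        unfolding S_def a_def E_def by (rule level_bounds(2)[OF kw kn T that(3) LS _ that(2) that(1)]) (use n3 in simp)
      define r where "r = (if odd (k - 1) then k - 1 else k - 2)"
      have r: "odd r" "r + 1 \<le> k" "k \<le> r + 2" "r \<ge> 1" using k2 unfolding r_def by (cases "odd (k - 1)"; simp; presburger)+
      obtain r' where r': "r = Suc r'" using r(4) by (cases r) auto
      have er': "even r'" using r(1) r' by simp
      have Ssuc: "S (Suc r') = S r' + real (t - 1 choose Suc r') * ((-1)^Suc r' * (N * p^(Suc r' + 1)))"
        by (simp add: S_def tT N_def p_def)
      have m1: "(-1::real)^Suc r' = -1" using er' by simp
      define c where "c = real (t - 1 choose r) * p ^ r"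
      have Sp: "S r' = S r + c * (N * p)"
      proof -
        have e: "(-1::real)^r' = 1" using er' by simp
        show ?thesis using Ssuc unfolding c_def r' by (simp add: e algebra_simps)
      qed
      have S1: "S 1 = N * p - real (t - 1) * (N * p^2)"
        by (simp add: S_def tT N_def p_def power2_eq_square)
      have tp1: "real (t - 1) * p \<le> 1 / 2"
      proof -
        have "real (t - 1) = real t - 1" using t1 by simp
        then show ?thesis using tp p0 by (simp add: algebra_simps)
      qed
      have S1b: "S 1 \<ge> N * p / 2"
      proof -
        have "N * p * (real (t - 1) * p) \<le> N * p * (1/2)" using tp1 N0 p0 by (intro mult_left_mono) simp_all
        then show ?thesis unfolding S1 by (simp add: power2_eq_square algebra_simps)
      qed
      have a1b: "a x1 \<ge> N * p / 2" using lb[of 1 x1] k2 x1 S1b by simp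
      have a1p: "a x1 > 0" using a1b N0 p0 by (smt (verit) divide_pos_pos mult_pos_pos)
      have a1r: "S r \<le> a x1" using lb[OF r(1) r(2) x1] .
      have cb: "c \<le> (1/2) ^ r"
      proof (cases "r \<le> t - 1")
        case True
        have "real (t - 1 choose r) \<le> real (t - 1) ^ r"
          using binomial_le_pow[OF True] by (metis of_nat_le_iff of_nat_power)
        then have "c \<le> real (t - 1) ^ r * p ^ r" unfolding c_def using p0 by (intro mult_right_mono) simp_all
        also have "\<dots> = (real (t - 1) * p) ^ r" by (simp add: power_mult_distrib)
        also have "\<dots> \<le> (1/2) ^ r" using tp1 p0 by (intro power_mono) simp_all
        finally show ?thesis .
      next
        case False
        then have z: "t - 1 choose r = 0" by simp
        show ?thesis unfolding c_def z by simp
      qed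
      have ub': "a x \<le> S r'" if "x \<in> T" for x using ub[OF er' _ that] r(2) r' by simp
      have Bb: "(\<Sum>x\<in>T. a x) \<le> real t * S r'"
      proof -
        have "(\<Sum>x\<in>T. a x) \<le> (\<Sum>x\<in>T. S r')" by (rule sum_mono) (rule ub')
        then show ?thesis using tT by simp
      qed
      define d where "d = 2 * (1/2::real) ^ r"
      have d0: "d \<ge> 0" by (simp add: d_def)
      have cNp: "c * (N * p) \<le> d * a x1"
      proof -
        have "c * (N * p) \<le> (1/2) ^ r * (N * p)" using cb N0 p0 by (intro mult_right_mono) simp_all
        also have "\<dots> \<le> (1/2) ^ r * (2 * a x1)" using a1b by (intro mult_left_mono) simp_all
        finally show ?thesis by (simp add: d_def)
      qed
      have Bb2: "(\<Sum>x\<in>T. a x) \<le> real t * (a x1 * (1 + d))"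
      proof -
        have "S r' \<le> a x1 * (1 + d)" using Sp a1r cNp by (simp add: algebra_simps)
        then have "real t * S r' \<le> real t * (a x1 * (1 + d))" by (intro mult_left_mono) simp_all
        then show ?thesis using Bb by linarith
      qed
      have Bpos: "(\<Sum>x\<in>T. a x) > 0"
      proof -
        have "a x1 \<le> (\<Sum>x\<in>T. a x)"
          by (rule member_le_sum[OF x1]) (simp_all add: a_def fT)
        then show ?thesis using a1p by linarith
      qed
      have td: "real t * d \<le> 4 / real n"
      proof -
        have "real n * real n \<le> 2 ^ (r + 2)"
          using nk power_increasing[OF r(3), of "2::real"] by linarith
        then have nn: "real n * real n \<le> 4 * 2 ^ r" by (simp add: power_add)
        have "real t * d = 2 * real t / 2 ^ r" by (simp add: d_def power_divide)
        also have "\<dots> \<le> 2 * real t * 4 / (real n * real n)"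
        proof -
          have "2 * real t / 2 ^ r = 2 * real t * 4 / (4 * 2 ^ r)" by simp
          also have "\<dots> \<le> 2 * real t * 4 / (real n * real n)"
            using nn n3 t1 by (intro divide_left_mono) simp_all
          finally show ?thesis .
        qed
        also have "\<dots> \<le> 4 / real n" using tn n3 by (simp add: field_simps)
        finally show ?thesis .
      qed
      have "1 / (real t + 4 / real n) \<le> 1 / (real t + real t * d)"
      proof (rule divide_left_mono)
        show "real t + real t * d \<le> real t + 4 / real n" using td by simp
        have "real t + real t * d > 0" using t1 d0 by (smt (verit) of_nat_0_le_iff of_nat_1 of_nat_mono mult_nonneg_nonneg)
        moreover have "real t + 4 / real n > 0" using t1 n3 by (smt (verit) divide_nonneg_nonneg of_nat_0_le_iff of_nat_1 of_nat_mono)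
        ultimately show "0 < (real t + 4 / real n) * (real t + real t * d)" by simp
      qed simp
      also have "\<dots> = a x1 / (real t * (a x1 * (1 + d)))"
      proof -
        have X: "real t * (a x1 * (1 + d)) = a x1 * (real t + real t * d)" by (simp add: algebra_simps)
        show ?thesis unfolding X using a1p by simp
      qed
      also have "\<dots> \<le> a x1 / (\<Sum>x\<in>T. a x)"
        using Bb2 Bpos a1p by (intro divide_left_mono) simp_all
      finally show ?thesis unfolding cp .
    qed
  qed
qed

end
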